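(* In $V_q$ set $x=e_1$, $y=e_2$, $\iota=e_{r-2}$ and $w=\epsilon_2e_{r-3}$. Then $$x^2=y-\epsilon_2=-w^2,\qquad \iota e_n=(-1)^n\epsilon_{n+1}e_{r-2-n}\ (0\le n\le r-2),\qquad \iota^2=-1.$$
   Context: Let $r\ge 5$ and $s$ be coprime odd integers with $0<s<r$, $q=\exp(i\pi s/r)$. For an integer $n$ put $[n]=\frac{q^n-q^{-n}}{q-q^{-1}}$, $[n]!=[n][n-1]\cdots[1]$, and for $1\le n\le r-1$ let $\epsilon_n=\operatorname{sign}[n]=(-1)^{\lfloor ns/r\rfloor}$ (so $\epsilon_1=1$ and $\epsilon_n=\epsilon_{r-n}$). A triple $(i,j,k)\in\{0,\dots,r-2\}^3$ is $r$-admissible if $i\le j+k$, $j\le i+k$, $k\le i+j$, $i+j+k$ is even and $i+j+k\le 2r-4$; for such a triple write $i=b+c$, $j=a+c$, $k=a+b$ and set $\langle i,j,k\rangle=(-1)^{a+b+c}\frac{[a+b+c+1]![a]![b]![c]!}{[a+b]![a+c]![b+c]!}$. Let $V_q$ be the $\mathbb{Q}$-vector space with basis $e_0,\dots,e_{r-2}$, with the symmetric bilinear form $\eta$ for which this basis is orthogonal and $\eta(e_i,e_i)=(-1)^i\epsilon_{i+1}$, and the symmetric trilinear form $\omega$ with $\omega(e_i,e_j,e_k)=\operatorname{sign}\langle i,j,k\rangle$ if $(i,j,k)$ is $r$-admissible and $0$ otherwise. The product on $V_q$ is defined by $\eta(x\cdot y,z)=\omega(x,y,z)$, giving a commutative associative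 unital algebra with unit $e_0=1$. *)

theory Defs
  imports Complex_Main
begin

definition qroot :: "nat \<Rightarrow> nat \<Rightarrow> complex" where
  "qroot r s = exp (\<i> * of_real (pi * real s / real r))"

definition qint :: "nat \<Rightarrow> nat \<Rightarrow> int \<Rightarrow> complex" where
  "qint r s n = (qroot r s powi n - qroot r s powi (- n)) / (qroot r s - inverse (qroot r s))"

definition qfact :: "nat \<Rightarrow> nat \<Rightarrow> nat \<Rightarrow> complex" where
  "qfact r s n = (\<Prod>k\<in>{1..n}. qint r s (int k))"

definition rsign :: "real \<Rightarrow> rat" where
  "rsign t = (if t > 0 then 1 else if t < 0 then -1 else 0)"

text \<open>epsilon_n = sign [n] ([n] is real).\<close>
definition qeps :: "nat \<Rightarrow> nat \<Rightarrow> nat \<Rightarrow> rat" where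
  "qeps r s n = rsign (Re (qint r s (int n)))"

definition r_admissible :: "nat \<Rightarrow> nat \<Rightarrow> nat \<Rightarrow> nat \<Rightarrow> bool" where
  "r_admissible r i j k \<longleftrightarrow> i \<le> r - 2 \<and> j \<le> r - 2 \<and> k \<le> r - 2 \<and>
     i \<le> j + k \<and> j \<le> i + k \<and> k \<le> i + j \<and> even (i + j + k) \<and> i + j + k \<le> 2 * r - 4"

definition theta :: "nat \<Rightarrow> nat \<Rightarrow> nat \<Rightarrow> nat \<Rightarrow> nat \<Rightarrow> complex" where
  "theta r s i j k =
     (let a = (j + k - i) div 2; b = (i + k - j) div 2; c = (i + j - k) div 2 in
      (-1) ^ (a + b + c) * qfact r s (a + b + c + 1) * qfact r s a * qfact r s b * qfact r s c
      / (qfact r s (a + b) * qfact r s (a + c) * qfact r s (b + c)))"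

text \<open>Elements of V_q: coefficient functions nat => rat (coordinates w.r.t. e_0..e_{r-2}).\<close>
definition ebasis :: "nat \<Rightarrow> nat \<Rightarrow> rat" where
  "ebasis n = (\<lambda>k. if k = n then 1 else 0)"

definition vscale :: "rat \<Rightarrow> (nat \<Rightarrow> rat) \<Rightarrow> nat \<Rightarrow> rat" where
  "vscale c v = (\<lambda>k. c * v k)"

definition etaD :: "nat \<Rightarrow> nat \<Rightarrow> nat \<Rightarrow> rat" where
  "etaD r s i = (-1) ^ i * qeps r s (i + 1)"

definition omegaB :: "nat \<Rightarrow> nat \<Rightarrow> nat \<Rightarrow> nat \<Rightarrow> nat \<Rightarrow> rat" where
  "omegaB r s i j k = (if r_admissible r i j k then rsign (Re (theta r s i j k)) else 0)"

definition omega :: "nat \<Rightarrow> nat \<Rightarrow> (nat \<Rightarrow> rat) \<Rightarrow> (nat \<Rightarrow> rat) \<Rightarrow> (nat \<Rightarrow> rat) \<Rightarrow> rat" where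
  "omega r s x y z = (\<Sum>i\<le>r-2. \<Sum>j\<le>r-2. \<Sum>k\<le>r-2. x i * y j * z k * omegaB r s i j k)"

text \<open>Product determined by eta(x.y, e_k) = omega(x,y,e_k); since eta is diagonal
  with entries +-1 on the basis, the k-th coordinate is eta(e_k,e_k) * omega(x,y,e_k).\<close>
definition vmul :: "nat \<Rightarrow> nat \<Rightarrow> (nat \<Rightarrow> rat) \<Rightarrow> (nat \<Rightarrow> rat) \<Rightarrow> nat \<Rightarrow> rat" where
  "vmul r s x y = (\<lambda>k. if k \<le> r - 2 then etaD r s k * omega r s x y (ebasis k) else 0)"

end

theory Submission imports Defs begin

lemma qint_real:
  "qint r s n = complex_of_real (sin (real_of_int n * (pi * real s / real r)) / sin (pi * real s / real r))"
proof -
  define t where "t = pi * real s / real r"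
  have q: "qroot r s = cis t" by (simp add: qroot_def cis_conv_exp t_def)
  have d: "\<And>a. cis a - cis (-a) = complex_of_real (2 * sin a) * \<i>"
    by (simp add: complex_eq_iff)
  have "qint r s n = (cis (of_int n * t) - cis (- (of_int n * t))) / (cis t - cis (-t))"
    unfolding qint_def q cis_power_int cis_inverse[symmetric] by (simp add: cis_power_int)
  also have "\<dots> = complex_of_real (2 * sin (of_int n * t)) * \<i> / (complex_of_real (2 * sin t) * \<i>)"
    by (simp only: d)
  also have "\<dots> = complex_of_real (sin (real_of_int n * t) / sin t)"
    by (simp add: of_real_divide)
  finally show ?thesis by (simp add: t_def)
qed
definition Qr :: "nat \<Rightarrow> nat \<Rightarrow> nat \<Rightarrow> real" where
  "Qr r s k = sin (real k * (pi * real s / real r)) / sin (pi * real s / real r)"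

lemma sin_t_pos: assumes "0 < s" "s < r" shows "sin (pi * real s / real r) > 0"
proof -
  have "0 < pi * real s / real r" using assms by simp
  moreover have "pi * real s / real r < pi" using assms by (simp add: divide_less_eq)
  ultimately show ?thesis by (intro sin_gt_zero) auto
qed

lemma Qr_1: assumes "0 < s" "s < r" shows "Qr r s 1 = 1"
  using sin_t_pos[OF assms] by (simp add: Qr_def)

lemma Qr_nz: assumes "0 < s" "s < r" "coprime r s" "0 < k" "k < r" shows "Qr r s k \<noteq> 0"
proof
  assume "Qr r s k = 0"
  hence "sin (real k * (pi * real s / real r)) = 0" using sin_t_pos[OF assms(1,2)] by (simp add: Qr_def)
  then obtain i :: int where i: "real k * (pi * real s / real r) = of_int i * pi" by (auto simp: sin_zero_iff_int2)
  have "real k * real s = of_int i * real r" using i assms by (simp add: field_simps)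
  hence "int k * int s = i * int r" by (metis of_int_eq_iff of_int_mult of_int_of_nat_eq)
  hence "int r dvd int k * int s" by simp
  hence "r dvd k * s" by (metis of_nat_dvd_iff of_nat_mult)
  hence "r dvd k" using assms(3) by (simp add: coprime_dvd_mult_left_iff)
  thus False using assms by (auto dest: dvd_imp_le)
qed

lemma Qr_sym: assumes "odd s" "0 < s" "s < r" "k \<le> r" shows "Qr r s (r - k) = Qr r s k"
proof -
  have "real (r - k) * (pi * real s / real r) = real s * pi - real k * (pi * real s / real r)"
    using assms by (simp add: of_nat_diff field_simps)
  moreover have "sin (real s * pi - x) = sin x" for x
    using assms(1) by (simp add: sin_diff)
  ultimately show ?thesis by (simp add: Qr_def)
qed

lemma qint_Qr: "qint r s (int k) = complex_of_real (Qr r s k)"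
  by (simp add: qint_real Qr_def)

lemma qfact_Qr: "qfact r s n = complex_of_real (\<Prod>k\<in>{1..n}. Qr r s k)"
  by (simp add: qfact_def qint_Qr)

lemma qeps_Qr: "qeps r s n = rsign (Qr r s n)"
  by (simp add: qeps_def qint_Qr)

definition Fr :: "nat \<Rightarrow> nat \<Rightarrow> nat \<Rightarrow> real" where
  "Fr r s n = (\<Prod>k\<in>{1..n}. Qr r s k)"

lemma Fr_0[simp]: "Fr r s 0 = 1" by (simp add: Fr_def)
lemma Fr_Suc: "Fr r s (Suc n) = Fr r s n * Qr r s (Suc n)"
  by (simp add: Fr_def prod.nat_ivl_Suc' mult.commute)
lemma Fr_nz: assumes "0 < s" "s < r" "coprime r s" "n < r" shows "Fr r s n \<noteq> 0"
  using assms(4) proof (induction n)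
  case 0 then show ?case by simp
next
  case (Suc n) then show ?case using Qr_nz[OF assms(1-3)] by (simp add: Fr_Suc)
qed

lemma qfact_Fr: "qfact r s n = complex_of_real (Fr r s n)"
  by (simp add: qfact_Qr Fr_def)

lemma theta_real: "theta r s i j k =
  complex_of_real ((-1) ^ ((j + k - i) div 2 + (i + k - j) div 2 + (i + j - k) div 2) *
     Fr r s ((j + k - i) div 2 + (i + k - j) div 2 + (i + j - k) div 2 + 1) *
     Fr r s ((j + k - i) div 2) * Fr r s ((i + k - j) div 2) * Fr r s ((i + j - k) div 2) /
     (Fr r s ((j + k - i) div 2 + (i + k - j) div 2) * Fr r s ((j + k - i) div 2 + (i + j - k) div 2) *
      Fr r s ((i + k - j) div 2 + (i + j - k) div 2)))"
  unfolding theta_def Let_def qfact_Fr by simp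

lemma rsign_mult: "rsign (a * b) = rsign a * rsign b"
  by (auto simp: rsign_def mult_pos_neg mult_neg_pos mult_neg_neg zero_less_mult_iff mult_less_0_iff)
lemma rsign_div: "rsign (a / b) = rsign a * rsign b"
  by (auto simp: rsign_def zero_less_divide_iff divide_less_0_iff)
lemma rsign_uminus: "rsign (- a) = - rsign a"
  by (auto simp: rsign_def)
lemma rsign_1[simp]: "rsign 1 = 1" by (simp add: rsign_def)
lemma rsign_sq: "a \<noteq> 0 \<Longrightarrow> rsign a * rsign a = 1" by (auto simp: rsign_def)

locale setup_rs =
  fixes r s :: nat
  assumes r5: "5 \<le> r" and rodd: "odd r" and sodd: "odd s" and cop: "coprime r s"
    and spos: "0 < s" and sr: "s < r"
begin

abbreviation "Q \<equiv> Qr r s"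
abbreviation "F \<equiv> Fr r s"

lemma Q1: "Q 1 = 1" using Qr_1 spos sr by blast
lemma Qnz: "0 < k \<Longrightarrow> k < r \<Longrightarrow> Q k \<noteq> 0" using Qr_nz spos sr cop by blast
lemma Qsym: "k \<le> r \<Longrightarrow> Q (r - k) = Q k" using Qr_sym sodd spos sr by blast
lemma Fnz: "n < r \<Longrightarrow> F n \<noteq> 0" using Fr_nz spos sr cop by blast
lemma F1: "F (Suc 0) = 1" using Fr_Suc[of r s 0] Q1 by simp
lemma F2: "F (Suc (Suc 0)) = Q 2" using Fr_Suc[of r s "Suc 0"] F1 by (simp add: numeral_2_eq_2)
lemma F3: "F (Suc (Suc (Suc 0))) = Q 2 * Q 3" using Fr_Suc[of r s "Suc (Suc 0)"] F2 by (simp add: numeral_3_eq_3)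

lemma om110: "omegaB r s 1 1 0 = - rsign (Q 2)"
proof -
  have "theta r s 1 1 0 = complex_of_real (- Q 2)"
    unfolding theta_real using F1 F2 by simp
  moreover have "r_admissible r 1 1 0" using r5 unfolding r_admissible_def by presburger
  ultimately show ?thesis by (simp add: omegaB_def rsign_uminus)
qed

lemma om112: "omegaB r s 1 1 2 = rsign (Q 3)"
proof -
  have "theta r s 1 1 2 = complex_of_real (Q 3)"
    unfolding theta_real using F1 F2 F3 Qnz[of 2] r5 by simp
  moreover have "r_admissible r 1 1 2" using r5 unfolding r_admissible_def by presburger
  ultimately show ?thesis by (simp add: omegaB_def)
qed

lemma om_w0: "omegaB r s (r-3) (r-3) 0 = rsign (Q 2)"
proof -
  obtain m where m: "r = m + 5" using r5 by (metis add.commute le_Suc_ex)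
  have me: "even m" using rodd m by simp
  have "r - 3 = m + 2" "r - 2 = m + 3" using m by auto
  have t: "theta r s (m+2) (m+2) 0 = complex_of_real ((-1)^(m+2) * F (m+3) * F (m+2) / (F (m+2) * F (m+2)))"
  proof -
    have d1: "(m + 2 + 0 - (m + 2)) div 2 = 0" by simp
    have d2: "(m + 2 + (m + 2) - 0) div 2 = m + 2" by simp
    show ?thesis unfolding theta_real d1 d2 by (simp add: numeral_eq_Suc)
  qed
  have "F (m+3) = F (m+2) * Q (m+3)" using Fr_Suc[of r s "m+2"] by (simp add: numeral_eq_Suc)
  moreover have "F (m+2) \<noteq> 0" using Fnz m by simp
  moreover have "Q (m+3) = Q 2" using Qsym[of 2] m by (simp add: add.commute)
  ultimately have "theta r s (m+2) (m+2) 0 = complex_of_real (Q 2)" using t me by simp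
  moreover have "r_admissible r (m+2) (m+2) 0" using m unfolding r_admissible_def by presburger
  ultimately show ?thesis using \<open>r - 3 = m + 2\<close> by (simp add: omegaB_def)
qed

lemma om_w2: "omegaB r s (r-3) (r-3) 2 = - rsign (Q 3)"
proof -
  obtain m where m: "r = m + 5" using r5 by (metis add.commute le_Suc_ex)
  have me: "even m" using rodd m by simp
  have "r - 3 = m + 2" using m by auto
  have t: "theta r s (m+2) (m+2) 2 = complex_of_real ((-1)^(m+3) * F (m+4) * F (m+1) / (Q 2 * F (m+2) * F (m+2)))"
  proof -
    have d1: "(m + 2 + 2 - (m + 2)) div 2 = 1" by simp
    have d2: "(m + 2 + (m + 2) - 2) div 2 = m + 1" by simp
    have e: "1 + 1 + (m + 1) + 1 = m + 4" "1 + 1 = Suc (Suc 0)" "1 + (m + 1) = m + 2" by simp_all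
    show ?thesis unfolding theta_real d1 d2 e using F1 F2 by (simp add: numeral_eq_Suc)
  qed
  have f2: "F (m+2) = F (m+1) * Q 3" using Fr_Suc[of r s "m+1"] Qsym[of 3] m by (simp add: numeral_eq_Suc add.commute)
  have f3: "F (m+3) = F (m+2) * Q 2" using Fr_Suc[of r s "m+2"] Qsym[of 2] m by (simp add: numeral_eq_Suc add.commute)
  have f4: "F (m+4) = F (m+3)" using Fr_Suc[of r s "m+3"] Qsym[of 1] Q1 m by (simp add: numeral_eq_Suc add.commute)
  have nz: "F (m+1) \<noteq> 0" "Q 2 \<noteq> 0" "Q 3 \<noteq> 0" using Fnz Qnz m by auto
  have "(-1::real)^(m+3) = -1" using me by simp
  hence "theta r s (m+2) (m+2) 2 = complex_of_real (- 1 / Q 3)"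
    using t nz unfolding f4 f3 f2 by (simp add: field_simps)
  moreover have "r_admissible r (m+2) (m+2) 2" using m unfolding r_admissible_def by presburger
  ultimately show ?thesis using \<open>r - 3 = m + 2\<close> by (simp add: omegaB_def rsign_div rsign_uminus)
qed

lemma om_iota: assumes "n \<le> r - 2" shows "omegaB r s (r-2) n (r-2-n) = -1"
proof -
  obtain m where m: "r = m + 5" using r5 by (metis add.commute le_Suc_ex)
  have me: "even m" using rodd m by simp
  have "r - 2 = m + 3" using m by auto
  define b where "b = m + 3 - n"
  have nb: "n + b = m + 3" using assms m b_def by simp
  have t: "theta r s (m+3) n b = complex_of_real ((-1)^(m+3) * F (m+4) * F b * F n / (F b * F n * F (m+3)))"
  proof -
    have d1: "(n + b - (m + 3)) div 2 = 0" using nb by simp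
    have d2: "(m + 3 + b - n) div 2 = b" using nb by simp
    have d3: "(m + 3 + n - b) div 2 = n" using nb by simp
    have e: "0 + b + n + 1 = m + 4" "0 + b = b" "0 + n = n" "b + n = m + 3" using nb by simp_all
    show ?thesis unfolding theta_real d1 d2 d3 e by (simp add: ac_simps)
  qed
  have f4: "F (m+4) = F (m+3)" using Fr_Suc[of r s "m+3"] Qsym[of 1] Q1 m by (simp add: numeral_eq_Suc add.commute)
  have c4: "F (4 + m) = F (m + 4)" by (simp add: add.commute)
  have nz: "F b \<noteq> 0" "F n \<noteq> 0" "F (m+3) \<noteq> 0" using Fnz m nb by auto
  have "(-1::real)^(m+3) = -1" using me by simp
  hence "(-1)^(m+3) * F (m+4) * F b * F n / (F b * F n * F (m+3)) = - 1"
    using nz unfolding f4 by (simp add: field_simps)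
  hence "theta r s (m+3) n b = complex_of_real (- 1)" using t by simp
  moreover have "r_admissible r (m+3) n b"
  proof -
    have ev: "m + 3 + n + b = 2 * (m + 3)" using nb by simp
    have evn: "even (m + 3 + n + b)" unfolding ev by simp
    have ineq: "m + 3 \<le> r - 2 \<and> n \<le> r - 2 \<and> b \<le> r - 2 \<and> m + 3 \<le> n + b \<and> n \<le> m + 3 + b \<and>
      b \<le> m + 3 + n \<and> m + 3 + n + b \<le> 2 * r - 4" using m nb by linarith
    show ?thesis unfolding r_admissible_def using ineq evn by blast
  qed
  ultimately show ?thesis using \<open>r - 2 = m + 3\<close> b_def by (simp add: omegaB_def rsign_uminus)
qed


lemma if01_mult: "(if P then 1 else 0) * (x::rat) = (if P then x else 0)" by simp
lemma if0_mult: "(if P then y else 0) * (x::rat) = (if P then y * x else 0)" by simp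
lemma sum_if_const: "(\<Sum>k\<in>A. if P then f k else (0::rat)) = (if P then sum f A else 0)" by simp

lemma omega_basis: assumes "a \<le> r-2" "b \<le> r-2" "c \<le> r-2"
  shows "omega r s (ebasis a) (ebasis b) (ebasis c) = omegaB r s a b c"
  using assms by (simp add: omega_def ebasis_def if01_mult if0_mult sum_if_const cong: if_cong)

lemma etaD0: "etaD r s 0 = 1" using Q1 by (simp add: etaD_def qeps_Qr)

lemma vmul_basis: assumes "a \<le> r-2" "b \<le> r-2"
  shows "vmul r s (ebasis a) (ebasis b) k = (if k \<le> r-2 then etaD r s k * omegaB r s a b k else 0)"
  using assms by (simp add: vmul_def omega_basis)

lemma vmul_scale: "vmul r s (vscale c u) (vscale c u) k = c * c * vmul r s u u k"
  by (simp add: vmul_def omega_def vscale_def sum_distrib_left mult_ac)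


lemma eps_sq: "0 < k \<Longrightarrow> k < r \<Longrightarrow> qeps r s k * qeps r s k = 1"
  using Qnz by (simp add: qeps_Qr rsign_sq)

lemma part1: "vmul r s (ebasis 1) (ebasis 1) = ebasis 2 - vscale (qeps r s 2) (ebasis 0)"
proof
  fix k
  show "vmul r s (ebasis 1) (ebasis 1) k = (ebasis 2 - vscale (qeps r s 2) (ebasis 0)) k"
  proof -
    have b: "1 \<le> r - 2" using r5 by simp
    consider "k = 0" | "k = 2" | "k \<noteq> 0" "k \<noteq> 2" by blast
    thus ?thesis
    proof cases
      case 1 thus ?thesis using vmul_basis[OF b b, of 0] om110 etaD0
        by (simp add: ebasis_def vscale_def qeps_Qr)
    next
      case 2
      have "etaD r s 2 = qeps r s 3" by (simp add: etaD_def)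
      thus ?thesis using 2 vmul_basis[OF b b, of 2] om112 eps_sq[of 3] r5
        by (simp add: ebasis_def vscale_def qeps_Qr)
    next
      case 3
      have "\<not> r_admissible r 1 1 k"
      proof
        assume "r_admissible r 1 1 k"
        hence "k \<le> 2" "even (1 + 1 + k)" unfolding r_admissible_def by auto
        moreover have "k = 1" using 3 \<open>k \<le> 2\<close> by linarith
        ultimately show False by simp
      qed
      thus ?thesis using 3 vmul_basis[OF b b, of k]
        by (simp add: ebasis_def vscale_def omegaB_def)
    qed
  qed
qed

lemma part2: "vmul r s (ebasis (r-3)) (ebasis (r-3)) = - (ebasis 2 - vscale (qeps r s 2) (ebasis 0))"
proof
  fix k
  show "vmul r s (ebasis (r-3)) (ebasis (r-3)) k = (- (ebasis 2 - vscale (qeps r s 2) (ebasis 0))) k"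
  proof -
    have b: "r - 3 \<le> r - 2" by simp
    consider "k = 0" | "k = 2" | "k \<noteq> 0" "k \<noteq> 2" by blast
    thus ?thesis
    proof cases
      case 1 thus ?thesis using vmul_basis[OF b b, of 0] om_w0 etaD0
        by (simp add: ebasis_def vscale_def qeps_Qr)
    next
      case 2
      have "etaD r s 2 = qeps r s 3" by (simp add: etaD_def)
      thus ?thesis using 2 vmul_basis[OF b b, of 2] om_w2 eps_sq[of 3] r5
        by (simp add: ebasis_def vscale_def qeps_Qr)
    next
      case 3
      have "\<not> r_admissible r (r-3) (r-3) k"
      proof
        assume "r_admissible r (r-3) (r-3) k"
        hence h: "r - 3 + (r - 3) + k \<le> 2 * r - 4" "even (r - 3 + (r - 3) + k)" unfolding r_admissible_def by auto
        have "k = 1" using 3 h(1) r5 by linarith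
        moreover have "r - 3 + (r - 3) + 1 = 2 * (r - 3) + 1" by simp
        ultimately show False using h(2) by simp
      qed
      thus ?thesis using 3 vmul_basis[OF b b, of k]
        by (simp add: ebasis_def vscale_def omegaB_def)
    qed
  qed
qed

lemma part3: assumes n: "n \<le> r - 2"
  shows "vmul r s (ebasis (r-2)) (ebasis n) = vscale ((-1) ^ n * qeps r s (n + 1)) (ebasis (r - 2 - n))"
proof
  fix k
  have b: "r - 2 \<le> r - 2" by simp
  show "vmul r s (ebasis (r-2)) (ebasis n) k = vscale ((-1) ^ n * qeps r s (n + 1)) (ebasis (r - 2 - n)) k"
  proof (cases "k = r - 2 - n")
    case True
    have e1: "qeps r s (r - 2 - n + 1) = qeps r s (n + 1)"
    proof -
      have "r - 2 - n + 1 = r - (n + 1)" using n r5 by simp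
      thus ?thesis using Qsym[of "n+1"] n r5 by (simp add: qeps_Qr)
    qed
    have e2: "(-1::rat) ^ (r - 2 - n) = - ((-1) ^ n)"
    proof -
      have rr: "r - 2 - n + n = r - 2" using n by simp
      have "(-1::rat) ^ (r - 2 - n) * (-1) ^ n = (-1) ^ (r - 2)"
        by (metis rr power_add)
      also have "\<dots> = -1" proof -
        have "odd (r - 2)" using rodd r5 by simp
        thus ?thesis by simp
      qed 
      finally have h: "(-1::rat) ^ (r - 2 - n) * (-1) ^ n = -1" .
      have sq: "(-1::rat) ^ n * (-1) ^ n = 1" by (simp add: power_add[symmetric])
      have "(-1::rat) ^ (r - 2 - n) = (-1) ^ (r - 2 - n) * ((-1) ^ n * (-1) ^ n)"
        by (simp only: sq mult_1_right)
      also have "\<dots> = ((-1) ^ (r - 2 - n) * (-1) ^ n) * (-1) ^ n" by (simp only: mult.assoc)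
      also have "\<dots> = - ((-1) ^ n)" unfolding h by simp
      finally show ?thesis .
    qed
    have kle: "k \<le> r - 2" using True by simp
    show ?thesis using True kle vmul_basis[OF b n, of k] om_iota[OF n] n e1 e2
      by (simp add: ebasis_def vscale_def etaD_def)
  next
    case False
    have "\<not> r_admissible r (r-2) n k"
    proof
      assume "r_admissible r (r-2) n k"
      hence "r - 2 \<le> n + k" "r - 2 + n + k \<le> 2 * r - 4" unfolding r_admissible_def by auto
      thus False using False n r5 by linarith
    qed
    thus ?thesis using False vmul_basis[OF b n, of k]
      by (simp add: ebasis_def vscale_def omegaB_def)
  qed
qed

lemma part4: "vmul r s (ebasis (r-2)) (ebasis (r-2)) = - ebasis 0"
proof -
  have "qeps r s (r - 2 + 1) = 1"
  proof -
    have "r - 2 + 1 = r - 1" using r5 by simp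
    thus ?thesis using Qsym[of 1] Q1 r5 by (simp add: qeps_Qr)
  qed
  moreover have "(-1::rat) ^ (r - 2) = -1" proof -
        have "odd (r - 2)" using rodd r5 by simp
        thus ?thesis by simp
      qed
  ultimately show ?thesis using part3[of "r-2"] by (auto simp: vscale_def ebasis_def)
qed

end

theorem mainTheorem5:
  fixes r s :: nat
  assumes "5 \<le> r" and "odd r" and "odd s" and "coprime r s" and "0 < s" and "s < r"
  defines "x \<equiv> ebasis 1"
    and "y \<equiv> ebasis 2"
    and "\<iota> \<equiv> ebasis (r - 2)"
    and "w \<equiv> vscale (qeps r s 2) (ebasis (r - 3))"
  shows "vmul r s x x = y - vscale (qeps r s 2) (ebasis 0) \<and>
         vmul r s x x = - vmul r s w w \<and>
         (\<forall>n \<le> r - 2. vmul r s \<iota> (ebasis n) = vscale ((-1) ^ n * qeps r s (n + 1)) (ebasis (r - 2 - n))) \<and>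
         vmul r s \<iota> \<iota> = - ebasis 0"
proof -
  interpret setup_rs r s using assms by unfold_locales auto
  have ww: "vmul r s w w = vmul r s (ebasis (r-3)) (ebasis (r-3))"
  proof
    fix k show "vmul r s w w k = vmul r s (ebasis (r-3)) (ebasis (r-3)) k"
      unfolding w_def vmul_scale using eps_sq[of 2] assms(1) by simp
  qed
  show ?thesis unfolding x_def y_def \<iota>_def ww using part1 part2 part3 part4 by (simp add: fun_eq_iff)
qed

end
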